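(* For every $n\ge 1$, the upper-diagonal CNMs of size $n$ are in bijection with the permutations in $S_{n-1}$; in particular there are exactly $(n-1)!$ upper-diagonal CNMs of size $n$.
   Context: A complete non-ambiguous matrix (CNM) of size $n$ is an $n\times n$ matrix $M=(m_{i,j})$ with entries in $\{0,1\}$ whose support $T=\{(i,j): m_{i,j}=1\}$ (whose elements are called vertices) satisfies: (1) $(1,1)\in T$; (2) for every $p=(i,j)\in T$ with $p\neq(1,1)$, exactly one of the following holds: there is $(i',j)\in T$ with $i'<i$, or there is $(i,j')\in T$ with $j'<j$; (3) every row and every column of $M$ contains at least one vertex; (4) define the parent of $p=(i,j)\neq(1,1)$ to be $(i',j)$ with $i'<i$ maximal if such a vertex exists, and otherwise $(i,j')$ with $j'<j$ maximal; then every vertex is the parent of either zero or exactly two vertices. A vertex with no children is a leaf. A CNM of size $n$ is upper-diagonal if its leaves are exactly the positions $(i,n+1-i)$, $1\le i\le n$ (i.e. its leaf matrix is the anti-diagonal permutation matrix). *)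

theory Defs
  imports Main "HOL-Combinatorics.Permutations"
begin

text \<open>A 0/1 matrix of size n is represented by its support
  T \<subseteq> {1..n} \<times> {1..n} (1-based row/column indices); the elements of T are the vertices.\<close>

definition cnm_parent :: "(nat \<times> nat) set \<Rightarrow> nat \<times> nat \<Rightarrow> nat \<times> nat" where
  "cnm_parent T p =
     (let i = fst p; j = snd p in
      if \<exists>i'<i. (i', j) \<in> T then (Max {i'. i' < i \<and> (i', j) \<in> T}, j)
      else (i, Max {j'. j' < j \<and> (i, j') \<in> T}))"

definition cnm_children :: "(nat \<times> nat) set \<Rightarrow> nat \<times> nat \<Rightarrow> (nat \<times> nat) set" where
  "cnm_children T p = {q \<in> T. q \<noteq> (1, 1) \<and> cnm_parent T q = p}"

definition is_cnm :: "nat \<Rightarrow> (nat \<times> nat) set \<Rightarrow> bool" where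
  "is_cnm n T \<longleftrightarrow>
     T \<subseteq> {1..n} \<times> {1..n} \<and>
     (1, 1) \<in> T \<and>
     (\<forall>(i, j) \<in> T. (i, j) \<noteq> (1, 1) \<longrightarrow>
        ((\<exists>i'<i. (i', j) \<in> T) \<noteq> (\<exists>j'<j. (i, j') \<in> T))) \<and>
     (\<forall>i \<in> {1..n}. \<exists>j. (i, j) \<in> T) \<and>
     (\<forall>j \<in> {1..n}. \<exists>i. (i, j) \<in> T) \<and>
     (\<forall>p \<in> T. card (cnm_children T p) = 0 \<or> card (cnm_children T p) = 2)"

definition cnm_leaves :: "(nat \<times> nat) set \<Rightarrow> (nat \<times> nat) set" where
  "cnm_leaves T = {p \<in> T. cnm_children T p = {}}"

definition is_upper_diagonal_cnm :: "nat \<Rightarrow> (nat \<times> nat) set \<Rightarrow> bool" where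
  "is_upper_diagonal_cnm n T \<longleftrightarrow>
     is_cnm n T \<and> cnm_leaves T = {(i, n + 1 - i) | i. i \<in> {1..n}}"

end

theory Submission
  imports Defs
begin

lemma telesc:
  assumes "1 \<in> V" "1 \<le> t"
  shows "(\<Sum>a\<in>{a\<in>V. 1\<le>a \<and> a\<le>t}. (\<Prod>j\<in>{2..a}-V. j-1) * (\<Prod>j\<in>{Suc a..t}-V. j))
         = t * (\<Prod>j\<in>{2..t}-V. j-(1::nat))"
  using assms(2)
proof (induction t rule: dec_induct)
  case base
  have "{a\<in>V. 1\<le>a \<and> a\<le>1} = {1}" using assms(1) by auto
  then show ?case by simp
next
  case (step t)
  show ?case
  proof (cases "Suc t \<in> V")
    case True
    have e1: "{a\<in>V. 1\<le>a \<and> a\<le>Suc t} = insert (Suc t) {a\<in>V. 1\<le>a \<and> a\<le>t}" using True by auto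
    have e2: "\<And>a. a \<le> t \<Longrightarrow> {Suc a..Suc t}-V = {Suc a..t}-V" using True by (auto simp: le_Suc_eq)
    have e3: "{2..Suc t}-V = {2..t}-V" using True by (auto simp: le_Suc_eq)
    have "(\<Sum>a\<in>{a\<in>V. 1\<le>a \<and> a\<le>Suc t}. (\<Prod>j\<in>{2..a}-V. j-1) * (\<Prod>j\<in>{Suc a..Suc t}-V. j))
       = (\<Prod>j\<in>{2..Suc t}-V. j-1) + (\<Sum>a\<in>{a\<in>V. 1\<le>a \<and> a\<le>t}. (\<Prod>j\<in>{2..a}-V. j-1) * (\<Prod>j\<in>{Suc a..Suc t}-V. j))"
      unfolding e1 by (subst sum.insert) auto
    also have "(\<Sum>a\<in>{a\<in>V. 1\<le>a \<and> a\<le>t}. (\<Prod>j\<in>{2..a}-V. j-1) * (\<Prod>j\<in>{Suc a..Suc t}-V. j))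
       = (\<Sum>a\<in>{a\<in>V. 1\<le>a \<and> a\<le>t}. (\<Prod>j\<in>{2..a}-V. j-1) * (\<Prod>j\<in>{Suc a..t}-V. j))"
      by (rule sum.cong) (auto simp: e2)
    finally show ?thesis using step.IH e3 by simp
  next
    case False
    have e1: "{a\<in>V. 1\<le>a \<and> a\<le>Suc t} = {a\<in>V. 1\<le>a \<and> a\<le>t}" using False by (auto simp: le_Suc_eq)
    have e2: "\<And>a. a \<le> t \<Longrightarrow> {Suc a..Suc t}-V = insert (Suc t) ({Suc a..t}-V)" using False by (auto simp: le_Suc_eq)
    have e3: "{2..Suc t}-V = insert (Suc t) ({2..t}-V)" using False step.hyps by (auto simp: le_Suc_eq)
    have "(\<Sum>a\<in>{a\<in>V. 1\<le>a \<and> a\<le>Suc t}. (\<Prod>j\<in>{2..a}-V. j-1) * (\<Prod>j\<in>{Suc a..Suc t}-V. j))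
       = (\<Sum>a\<in>{a\<in>V. 1\<le>a \<and> a\<le>t}. Suc t * ((\<Prod>j\<in>{2..a}-V. j-1) * (\<Prod>j\<in>{Suc a..t}-V. j)))"
      unfolding e1 by (rule sum.cong) (auto simp: e2 algebra_simps)
    also have "\<dots> = Suc t * (t * (\<Prod>j\<in>{2..t}-V. j-(1::nat)))"
      unfolding sum_distrib_left[symmetric] step.IH ..
    finally show ?thesis using e3 by simp
  qed
qed


definition rowok :: "nat \<Rightarrow> nat set \<Rightarrow> nat set \<Rightarrow> bool" where
  "rowok m V R \<longleftrightarrow> R \<subseteq> {1..m} \<and> m \<in> R \<and> (\<forall>j\<in>R. (j \<in> V) \<noteq> (\<exists>j'\<in>R. j' < j))"

lemma rows_finite: "finite {R. rowok m V R}"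
  by (rule finite_subset[of _ "Pow {1..m}"]) (auto simp: rowok_def)

lemma rows_in: assumes "Suc k \<in> V" shows "{R. rowok (Suc k) V R} = {{Suc k}}"
proof -
  have "R = {Suc k}" if "rowok (Suc k) V R" for R
  proof -
    from that have R: "R \<subseteq> {1..Suc k}" "Suc k \<in> R" "\<forall>j\<in>R. (j \<in> V) \<noteq> (\<exists>j'\<in>R. j' < j)"
      by (auto simp: rowok_def)
    have "\<not> (\<exists>j'\<in>R. j' < Suc k)" using R(2,3) assms by blast
    then show ?thesis using R(1,2) by force
  qed
  moreover have "rowok (Suc k) V {Suc k}" using assms by (auto simp: rowok_def)
  ultimately show ?thesis by blast
qed

lemma rows_out:
  assumes "Suc k \<notin> V" "1 \<in> V"
  shows "{R. rowok (Suc k) V R} =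
    (\<lambda>(a,S). insert a (insert (Suc k) S)) ` (SIGMA a:{a\<in>V. 1\<le>a \<and> a\<le>k}. Pow ({Suc a..k} - V))"
proof (rule set_eqI, rule iffI)
  fix R assume "R \<in> {R. rowok (Suc k) V R}"
  then have R: "R \<subseteq> {1..Suc k}" "Suc k \<in> R" "\<forall>j\<in>R. (j \<in> V) \<noteq> (\<exists>j'\<in>R. j' < j)"
    by (auto simp: rowok_def)
  define a where "a = Min R"
  have fin: "finite R" using R(1) finite_subset by blast
  have aR: "a \<in> R" using R(2) fin unfolding a_def by (intro Min_in) auto
  have amin: "\<forall>j\<in>R. a \<le> j" using fin a_def by simp
  have "\<not> (\<exists>j'\<in>R. j' < a)" using amin by (auto simp: not_less)
  then have aV: "a \<in> V" using R(3) aR by blast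
  have ak: "a \<le> k" using aV assms(1) aR R(1) by (metis atLeastAtMost_iff le_Suc_eq subsetD)
  have a1: "1 \<le> a" using aR R(1) by auto
  define S where "S = R - {a, Suc k}"
  have "S \<subseteq> {Suc a..k} - V"
  proof
    fix j assume "j \<in> S"
    then have j: "j \<in> R" "j \<noteq> a" "j \<noteq> Suc k" by (auto simp: S_def)
    have "a < j" using amin j by (simp add: order_le_neq_trans)
    then have "j \<notin> V" using R(3) j aR by blast
    then show "j \<in> {Suc a..k} - V" using j R(1) \<open>a<j\<close> by auto
  qed
  moreover have "R = insert a (insert (Suc k) S)" using aR R(2) by (auto simp: S_def)
  ultimately show "R \<in> (\<lambda>(a,S). insert a (insert (Suc k) S)) ` (SIGMA a:{a\<in>V. 1\<le>a \<and> a\<le>k}. Pow ({Suc a..k} - V))"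
    using aV ak a1 by (intro image_eqI[of _ _ "(a,S)"]) auto
next
  fix R assume "R \<in> (\<lambda>(a,S). insert a (insert (Suc k) S)) ` (SIGMA a:{a\<in>V. 1\<le>a \<and> a\<le>k}. Pow ({Suc a..k} - V))"
  then obtain a S where aS: "a \<in> V" "1 \<le> a" "a \<le> k" "S \<subseteq> {Suc a..k} - V"
    and R: "R = insert a (insert (Suc k) S)" by auto
  have "\<forall>j\<in>R. (j \<in> V) \<noteq> (\<exists>j'\<in>R. j' < j)"
  proof
    fix j assume j: "j \<in> R"
    show "(j \<in> V) \<noteq> (\<exists>j'\<in>R. j' < j)"
    proof (cases "j = a")
      case True
      have "\<not> (\<exists>j'\<in>R. j' < a)" using R aS by auto
      then show ?thesis using True aS by simp
    next
      case False
      then have "j \<notin> V" "a < j" using j R aS assms(1) by auto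
      then show ?thesis using R by auto
    qed
  qed
  then show "R \<in> {R. rowok (Suc k) V R}" using R aS by (auto simp: rowok_def)
qed

lemma rows_inj:
  assumes "Suc k \<notin> V"
  shows "inj_on (\<lambda>(a,S). insert a (insert (Suc k) S)) (SIGMA a:{a\<in>V. 1\<le>a \<and> a\<le>k}. Pow ({Suc a..k} - V))"
proof (rule inj_onI, clarify)
  fix a S b T
  assume H: "a \<in> V" "1 \<le> a" "a \<le> k" "S \<subseteq> {Suc a..k} - V" "b \<in> V" "1 \<le> b" "b \<le> k" "T \<subseteq> {Suc b..k} - V"
    and eq: "insert a (insert (Suc k) S) = insert b (insert (Suc k) T)"
  have m1: "\<forall>x\<in>insert a (insert (Suc k) S). a \<le> x" using H(3,4) by auto
  have m2: "\<forall>x\<in>insert b (insert (Suc k) T). b \<le> x" using H(7,8) by auto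
  have "b \<in> insert a (insert (Suc k) S)" unfolding eq by simp
  moreover have "a \<in> insert b (insert (Suc k) T)" unfolding eq[symmetric] by simp
  ultimately have "a = b" using m1 m2 eq by (metis antisym)
  moreover have "S = T"
  proof -
    have "S = insert a (insert (Suc k) S) - {a, Suc k}" using H by auto
    also have "\<dots> = insert b (insert (Suc k) T) - {b, Suc k}" using eq \<open>a = b\<close> by simp
    also have "\<dots> = T" using H by auto
    finally show ?thesis .
  qed
  ultimately show "a = b \<and> S = T" by simp
qed

lemma sum_rows:
  assumes "1 \<in> V"
  shows "(\<Sum>R\<in>{R. rowok (Suc k) V R}. \<Prod>j\<in>{2..k}-(V\<union>R). j - (1::nat)) = (\<Prod>j\<in>{2..Suc k}-V. j - 1)"
proof (cases "Suc k \<in> V")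
  case True
  have "{2..k}-(V\<union>{Suc k}) = {2..Suc k}-V" using True by (auto simp: le_Suc_eq)
  then show ?thesis using rows_in[OF True] by simp
next
  case False
  have k1: "1 \<le> k" using False assms by (cases k) auto
  let ?f = "\<lambda>(a,S). insert a (insert (Suc k) S)"
  let ?g = "\<lambda>R. \<Prod>j\<in>{2..k}-(V\<union>R). j - (1::nat)"
  have finA: "finite {a\<in>V. 1\<le>a \<and> a\<le>k}" by (rule finite_subset[of _ "{..k}"]) auto
  have "(\<Sum>R\<in>{R. rowok (Suc k) V R}. ?g R) = sum (?g \<circ> ?f) (SIGMA a:{a\<in>V. 1\<le>a \<and> a\<le>k}. Pow ({Suc a..k} - V))"
    unfolding rows_out[OF False assms] by (rule sum.reindex[OF rows_inj[OF False]])
  also have "\<dots> = (\<Sum>a\<in>{a\<in>V. 1\<le>a \<and> a\<le>k}. \<Sum>S\<in>Pow ({Suc a..k} - V). ?g (insert a (insert (Suc k) S)))"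
    by (subst sum.Sigma[OF finA]) (auto intro!: sum.cong)
  also have "\<dots> = (\<Sum>a\<in>{a\<in>V. 1\<le>a \<and> a\<le>k}. (\<Prod>j\<in>{2..a}-V. j-1) * (\<Prod>j\<in>{Suc a..k}-V. j))"
  proof (rule sum.cong[OF refl])
    fix a assume a: "a \<in> {a\<in>V. 1\<le>a \<and> a\<le>k}"
    let ?Fa = "{Suc a..k} - V"
    have "(\<Sum>S\<in>Pow ?Fa. ?g (insert a (insert (Suc k) S)))
        = (\<Sum>S\<in>Pow ?Fa. (\<Prod>j\<in>{2..a}-V. j-1) * ((\<Prod>j\<in>S. 1) * (\<Prod>j\<in>?Fa - S. j - 1)))"
    proof (rule sum.cong[OF refl])
      fix S assume S: "S \<in> Pow ?Fa"
      have e: "{2..k}-(V\<union>insert a (insert (Suc k) S)) = ({2..a}-V) \<union> (?Fa - S)" using a S by auto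
      have "?g (insert a (insert (Suc k) S)) = (\<Prod>j\<in>({2..a}-V) \<union> (?Fa - S). j - 1)" unfolding e ..
      also have "\<dots> = (\<Prod>j\<in>{2..a}-V. j-1) * (\<Prod>j\<in>?Fa - S. j - 1)"
        by (rule prod.union_disjoint) auto
      finally show "?g (insert a (insert (Suc k) S)) = (\<Prod>j\<in>{2..a}-V. j-1) * ((\<Prod>j\<in>S. 1) * (\<Prod>j\<in>?Fa - S. j - 1))"
        by simp
    qed
    also have "\<dots> = (\<Prod>j\<in>{2..a}-V. j-1) * (\<Prod>j\<in>?Fa. 1 + (j - 1))"
      unfolding sum_distrib_left[symmetric] by (subst prod_add) simp_all
    also have "(\<Prod>j\<in>?Fa. 1 + (j - 1)) = (\<Prod>j\<in>?Fa. j)"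
      by (rule prod.cong) auto
    finally show "(\<Sum>S\<in>Pow ?Fa. ?g (insert a (insert (Suc k) S))) = (\<Prod>j\<in>{2..a}-V. j-1) * (\<Prod>j\<in>{Suc a..k}-V. j)" .
  qed
  also have "\<dots> = k * (\<Prod>j\<in>{2..k}-V. j-1)" by (rule telesc[OF assms k1])
  also have "\<dots> = (\<Prod>j\<in>{2..Suc k}-V. j - 1)"
  proof -
    have "{2..Suc k}-V = insert (Suc k) ({2..k}-V)" using False k1 by (auto simp: le_Suc_eq)
    then show ?thesis by simp
  qed
  finally show ?thesis .
qed


definition tri :: "nat \<Rightarrow> (nat \<times> nat) set" where
  "tri m = {(i,j). 1 \<le> i \<and> 1 \<le> j \<and> i + j \<le> Suc m}"
definition adg :: "nat \<Rightarrow> (nat \<times> nat) set" where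
  "adg m = {(i, Suc m - i) | i. 1 \<le> i \<and> i \<le> m}"
definition xok :: "nat set \<Rightarrow> (nat \<times> nat) set \<Rightarrow> bool" where
  "xok V W \<longleftrightarrow> (\<forall>i j. (i,j) \<in> W \<longrightarrow> ((j \<in> V \<or> (\<exists>i'<i. (i',j) \<in> W)) \<noteq> (\<exists>j'<j. (i,j') \<in> W)))"
definition CC :: "nat \<Rightarrow> nat set \<Rightarrow> (nat \<times> nat) set set" where
  "CC m V = {W. adg m \<subseteq> W \<and> W \<subseteq> tri m \<and> xok V W}"
definition row1 :: "(nat \<times> nat) set \<Rightarrow> nat set" where
  "row1 W = {j. (1,j) \<in> W}"
definition dn :: "(nat \<times> nat) set \<Rightarrow> (nat \<times> nat) set" where
  "dn W = {(i,j). 1 \<le> i \<and> (Suc i, j) \<in> W}"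
definition bld :: "nat set \<Rightarrow> (nat \<times> nat) set \<Rightarrow> (nat \<times> nat) set" where
  "bld R W' = (\<lambda>j. (1,j)) ` R \<union> (\<lambda>(i,j). (Suc i, j)) ` W'"

lemma bld_mem: "(a,b) \<in> bld R W' \<longleftrightarrow> (a = 1 \<and> b \<in> R) \<or> (\<exists>i. a = Suc i \<and> (i,b) \<in> W')"
  unfolding bld_def by auto

lemma finite_tri: "finite (tri m)"
  by (rule finite_subset[of _ "{..Suc m} \<times> {..Suc m}"]) (auto simp: tri_def)

lemma finite_CC: "finite (CC m V)"
  by (rule finite_subset[of _ "Pow (tri m)"]) (auto simp: CC_def finite_tri)

lemma CC0: "CC 0 V = {{}}"
proof -
  have "tri 0 = {}" by (auto simp: tri_def)
  moreover have "adg 0 = {}" by (auto simp: adg_def)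
  ultimately show ?thesis by (auto simp: CC_def xok_def)
qed

lemma dec_fwd1:
  assumes W: "W \<in> CC (Suc k) V"
  shows "rowok (Suc k) V (row1 W)"
proof -
  have t: "W \<subseteq> tri (Suc k)" and a: "adg (Suc k) \<subseteq> W" and x: "xok V W" using W by (auto simp: CC_def)
  have "row1 W \<subseteq> {1..Suc k}" using t by (auto simp: row1_def tri_def)
  moreover have "(1, Suc k) \<in> adg (Suc k)" unfolding adg_def by force
  then have "Suc k \<in> row1 W" using a by (auto simp: row1_def)
  moreover have "\<forall>j\<in>row1 W. (j \<in> V) \<noteq> (\<exists>j'\<in>row1 W. j' < j)"
  proof
    fix j assume "j \<in> row1 W"
    then have "(1,j) \<in> W" by (simp add: row1_def)
    then have "(j \<in> V \<or> (\<exists>i'<1. (i',j) \<in> W)) \<noteq> (\<exists>j'<j. (1,j') \<in> W)" using x unfolding xok_def by blast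
    moreover have "\<not> (\<exists>i'<1. (i',j) \<in> W)" using t by (auto simp: tri_def)
    ultimately show "(j \<in> V) \<noteq> (\<exists>j'\<in>row1 W. j' < j)" by (auto simp: row1_def)
  qed
  ultimately show ?thesis by (simp add: rowok_def)
qed

lemma dec_fwd2:
  assumes W: "W \<in> CC (Suc k) V"
  shows "dn W \<in> CC k (V \<union> row1 W)"
proof -
  have t: "W \<subseteq> tri (Suc k)" and a: "adg (Suc k) \<subseteq> W" and x: "xok V W" using W by (auto simp: CC_def)
  have "adg k \<subseteq> dn W"
  proof
    fix p assume "p \<in> adg k"
    then obtain i where p: "p = (i, Suc k - i)" "1 \<le> i" "i \<le> k" by (auto simp: adg_def)
    have "(Suc i, Suc (Suc k) - Suc i) \<in> adg (Suc k)" unfolding adg_def using p by force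
    then have "(Suc i, Suc k - i) \<in> W" using a by auto
    then show "p \<in> dn W" using p by (simp add: dn_def)
  qed
  moreover have "dn W \<subseteq> tri k" using t by (auto simp: dn_def tri_def)
  moreover have "xok (V \<union> row1 W) (dn W)"
    unfolding xok_def
  proof (intro allI impI)
    fix i j assume ij: "(i,j) \<in> dn W"
    then have i1: "1 \<le> i" and w: "(Suc i, j) \<in> W" by (auto simp: dn_def)
    have xx: "(j \<in> V \<or> (\<exists>i'<Suc i. (i',j) \<in> W)) \<noteq> (\<exists>j'<j. (Suc i,j') \<in> W)" using x w by (simp add: xok_def)
    have l: "(\<exists>j'<j. (i,j') \<in> dn W) = (\<exists>j'<j. (Suc i,j') \<in> W)" using i1 by (auto simp: dn_def)
    have u: "(\<exists>i'<Suc i. (i',j) \<in> W) = ((1,j) \<in> W \<or> (\<exists>i'<i. (i',j) \<in> dn W))"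
    proof
      assume "\<exists>i'<Suc i. (i',j) \<in> W"
      then obtain i' where i': "i' < Suc i" "(i',j) \<in> W" by blast
      then have "1 \<le> i'" using t by (auto simp: tri_def)
      show "(1,j) \<in> W \<or> (\<exists>i'<i. (i',j) \<in> dn W)"
      proof (cases "i' = 1")
        case True then show ?thesis using i' by simp
      next
        case False
        then obtain i'' where "i' = Suc i''" "1 \<le> i''" using \<open>1 \<le> i'\<close> by (cases i') auto
        then show ?thesis using i' by (auto simp: dn_def)
      qed
    next
      assume "(1,j) \<in> W \<or> (\<exists>i'<i. (i',j) \<in> dn W)"
      then show "\<exists>i'<Suc i. (i',j) \<in> W"
      proof
        assume "(1,j) \<in> W" then show ?thesis using i1 by (intro exI[of _ 1]) auto
      next
        assume "\<exists>i'<i. (i',j) \<in> dn W"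
        then obtain i' where "i' < i" "(Suc i',j) \<in> W" by (auto simp: dn_def)
        then show ?thesis by (intro exI[of _ "Suc i'"]) auto
      qed
    qed
    show "(j \<in> V \<union> row1 W \<or> (\<exists>i'<i. (i',j) \<in> dn W)) \<noteq> (\<exists>j'<j. (i,j') \<in> dn W)"
      using xx unfolding l u by (auto simp: row1_def)
  qed
  ultimately show ?thesis by (simp add: CC_def)
qed

lemma dec_bwd:
  assumes R: "rowok (Suc k) V R" and W': "W' \<in> CC k (V \<union> R)"
  shows "bld R W' \<in> CC (Suc k) V"
proof -
  have t: "W' \<subseteq> tri k" and a: "adg k \<subseteq> W'" and x: "xok (V \<union> R) W'" using W' by (auto simp: CC_def)
  have R1: "R \<subseteq> {1..Suc k}" "Suc k \<in> R" "\<forall>j\<in>R. (j \<in> V) \<noteq> (\<exists>j'\<in>R. j' < j)" using R by (auto simp: rowok_def)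
  have "adg (Suc k) \<subseteq> bld R W'"
  proof
    fix p assume "p \<in> adg (Suc k)"
    then obtain i where p: "p = (i, Suc (Suc k) - i)" "1 \<le> i" "i \<le> Suc k" by (auto simp: adg_def)
    show "p \<in> bld R W'"
    proof (cases "i = 1")
      case True then show ?thesis using p R1 by (simp add: bld_mem)
    next
      case False
      then obtain i' where i': "i = Suc i'" "1 \<le> i'" "i' \<le> k" using p by (cases i) auto
      have "(i', Suc k - i') \<in> adg k" unfolding adg_def using i' by force
      then have "(i', Suc k - i') \<in> W'" using a by auto
      then show ?thesis using p i' by (simp add: bld_mem)
    qed
  qed
  moreover have "bld R W' \<subseteq> tri (Suc k)" using t R1(1) by (auto simp: bld_def tri_def)
  moreover have "xok V (bld R W')"
    unfolding xok_def
  proof (intro allI impI)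
    fix i j assume ij: "(i,j) \<in> bld R W'"
    show "(j \<in> V \<or> (\<exists>i'<i. (i',j) \<in> bld R W')) \<noteq> (\<exists>j'<j. (i,j') \<in> bld R W')"
    proof (cases "i = 1")
      case True
      then have jR: "j \<in> R" using ij t by (auto simp: bld_mem tri_def)
      have "\<not> (\<exists>i'<i. (i',j) \<in> bld R W')" using True t by (auto simp: bld_mem)
      moreover have "(\<exists>j'<j. (i,j') \<in> bld R W') = (\<exists>j'\<in>R. j' < j)" using True t by (auto simp: bld_mem tri_def)
      ultimately show ?thesis using R1(3) jR by blast
    next
      case False
      then obtain i0 where i0: "i = Suc i0" "(i0,j) \<in> W'" using ij by (auto simp: bld_mem)
      have i01: "1 \<le> i0" using i0 t by (auto simp: tri_def)
      have xx: "(j \<in> V \<union> R \<or> (\<exists>i'<i0. (i',j) \<in> W')) \<noteq> (\<exists>j'<j. (i0,j') \<in> W')" using x i0 by (simp add: xok_def)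
      have l: "(\<exists>j'<j. (i,j') \<in> bld R W') = (\<exists>j'<j. (i0,j') \<in> W')" using i0 i01 by (auto simp: bld_mem)
      have u: "(\<exists>i'<i. (i',j) \<in> bld R W') = (j \<in> R \<or> (\<exists>i'<i0. (i',j) \<in> W'))"
      proof
        assume "\<exists>i'<i. (i',j) \<in> bld R W'"
        then obtain i' where i': "i' < i" "(i',j) \<in> bld R W'" by blast
        then show "j \<in> R \<or> (\<exists>i'<i0. (i',j) \<in> W')" using i0 by (auto simp: bld_mem)
      next
        assume "j \<in> R \<or> (\<exists>i'<i0. (i',j) \<in> W')"
        then show "\<exists>i'<i. (i',j) \<in> bld R W'"
        proof
          assume "j \<in> R" then show ?thesis using i0 i01 by (intro exI[of _ 1]) (auto simp: bld_mem)
        next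
          assume "\<exists>i'<i0. (i',j) \<in> W'"
          then obtain i' where "i' < i0" "(i',j) \<in> W'" by blast
          then show ?thesis using i0 by (intro exI[of _ "Suc i'"]) (auto simp: bld_mem)
        qed
      qed
      show ?thesis using xx unfolding l u by auto
    qed
  qed
  ultimately show ?thesis by (simp add: CC_def)
qed

lemma decomp:
  "bij_betw (\<lambda>W. (row1 W, dn W)) (CC (Suc k) V) (SIGMA R:{R. rowok (Suc k) V R}. CC k (V \<union> R))"
proof (rule bij_betw_byWitness[where f'="\<lambda>(R,W'). bld R W'"])
  show "\<forall>W\<in>CC (Suc k) V. (case (row1 W, dn W) of (R, W') \<Rightarrow> bld R W') = W"
  proof
    fix W assume W: "W \<in> CC (Suc k) V"
    then have t: "W \<subseteq> tri (Suc k)" by (simp add: CC_def)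
    show "(case (row1 W, dn W) of (R, W') \<Rightarrow> bld R W') = W"
    proof (rule set_eqI)
      fix p :: "nat \<times> nat"
      obtain a b where p: "p = (a,b)" by fastforce
      show "p \<in> (case (row1 W, dn W) of (R, W') \<Rightarrow> bld R W') \<longleftrightarrow> p \<in> W"
      proof
        assume "p \<in> (case (row1 W, dn W) of (R, W') \<Rightarrow> bld R W')"
        then show "p \<in> W" using p by (auto simp: bld_mem row1_def dn_def)
      next
        assume "p \<in> W"
        then have a1: "1 \<le> a" using t p by (auto simp: tri_def)
        show "p \<in> (case (row1 W, dn W) of (R, W') \<Rightarrow> bld R W')"
        proof (cases "a = 1")
          case True then show ?thesis using \<open>p \<in> W\<close> p by (auto simp: bld_mem row1_def)
        next
          case False
          then obtain i where "a = Suc i" "1 \<le> i" using a1 by (cases a) auto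
          then show ?thesis using \<open>p \<in> W\<close> p by (auto simp: bld_mem dn_def)
        qed
      qed
    qed
  qed
  show "\<forall>x\<in>(SIGMA R:{R. rowok (Suc k) V R}. CC k (V \<union> R)). (\<lambda>W. (row1 W, dn W)) (case x of (R, W') \<Rightarrow> bld R W') = x"
  proof (clarify)
    fix R W' assume R: "rowok (Suc k) V R" and W': "W' \<in> CC k (V \<union> R)"
    then have t: "W' \<subseteq> tri k" by (simp add: CC_def)
    have "row1 (bld R W') = R" using t by (auto simp: row1_def bld_mem tri_def)
    moreover have "dn (bld R W') = W'"
    proof (rule set_eqI)
      fix p :: "nat \<times> nat"
      obtain a b where p: "p = (a,b)" by fastforce
      show "p \<in> dn (bld R W') \<longleftrightarrow> p \<in> W'"
        using t p by (auto simp: dn_def bld_mem tri_def)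
    qed
    ultimately show "row1 (bld R W') = R \<and> dn (bld R W') = W'" by simp
  qed
  show "(\<lambda>W. (row1 W, dn W)) ` CC (Suc k) V \<subseteq> (SIGMA R:{R. rowok (Suc k) V R}. CC k (V \<union> R))"
    using dec_fwd1 dec_fwd2 by blast
  show "(\<lambda>(R, W'). bld R W') ` (SIGMA R:{R. rowok (Suc k) V R}. CC k (V \<union> R)) \<subseteq> CC (Suc k) V"
    using dec_bwd by auto
qed

lemma card_CC:
  assumes "1 \<in> V"
  shows "card (CC m V) = (\<Prod>j\<in>{2..m}-V. j - 1)"
  using assms
proof (induction m arbitrary: V)
  case 0
  then show ?case by (simp add: CC0)
next
  case (Suc k)
  have "card (CC (Suc k) V) = card (SIGMA R:{R. rowok (Suc k) V R}. CC k (V \<union> R))"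
    by (rule bij_betw_same_card[OF decomp])
  also have "\<dots> = (\<Sum>R\<in>{R. rowok (Suc k) V R}. card (CC k (V \<union> R)))"
    by (rule card_SigmaI) (auto simp: rows_finite finite_CC)
  also have "\<dots> = (\<Sum>R\<in>{R. rowok (Suc k) V R}. \<Prod>j\<in>{2..k}-(V\<union>R). j - 1)"
  proof (rule sum.cong[OF refl])
    fix R assume "R \<in> {R. rowok (Suc k) V R}"
    show "card (CC k (V \<union> R)) = (\<Prod>j\<in>{2..k}-(V\<union>R). j - 1)"
      using Suc.IH[of "V \<union> R"] Suc.prems by simp
  qed
  also have "\<dots> = (\<Prod>j\<in>{2..Suc k}-V. j - 1)" by (rule sum_rows[OF Suc.prems])
  finally show ?case .
qed


lemma adg_eq: "{(i, n + 1 - i) | i. i \<in> {1..n}} = adg n"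
  by (auto simp: adg_def)

lemma parent_simp:
  "cnm_parent T (i,j) = (if \<exists>i'<i. (i', j) \<in> T then (Max {i'. i' < i \<and> (i', j) \<in> T}, j)
      else (i, Max {j'. j' < j \<and> (i, j') \<in> T}))"
  by (simp add: cnm_parent_def Let_def)

lemma fin_less1: "finite {i'. i' < (i::nat) \<and> P i'}" by (rule finite_subset[of _ "{..<i}"]) auto

lemma ud_to_CC:
  assumes U: "is_upper_diagonal_cnm n T"
  shows "T \<in> CC n {1}"
proof -
  have C: "is_cnm n T" and L: "cnm_leaves T = adg n" using U unfolding is_upper_diagonal_cnm_def adg_eq by auto
  have sq: "T \<subseteq> {1..n} \<times> {1..n}" using C by (simp add: is_cnm_def)
  have r11: "(1,1) \<in> T" using C by (simp add: is_cnm_def)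
  have xr: "\<And>i j. (i,j) \<in> T \<Longrightarrow> (i,j) \<noteq> (1,1) \<Longrightarrow> (\<exists>i'<i. (i', j) \<in> T) \<noteq> (\<exists>j'<j. (i, j') \<in> T)"
    using C unfolding is_cnm_def by blast
  have aT: "adg n \<subseteq> T" using L unfolding cnm_leaves_def by blast
  have "T \<subseteq> tri n"
  proof
    fix p assume pT: "p \<in> T"
    obtain i j where p: "p = (i,j)" by fastforce
    have i1: "1 \<le> i" "i \<le> n" "1 \<le> j" "j \<le> n" using sq pT p by auto
    show "p \<in> tri n"
    proof (rule ccontr)
      assume "p \<notin> tri n"
      then have big: "Suc n - i < j" using i1 p by (auto simp: tri_def)
      define c where "c = Suc n - i"
      have lf: "(i, c) \<in> cnm_leaves T" using L i1 unfolding c_def adg_def by auto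
      then have lT: "(i,c) \<in> T" and nch: "cnm_children T (i,c) = {}" by (auto simp: cnm_leaves_def)
      define J where "J = {j'. c < j' \<and> (i,j') \<in> T}"
      have finJ: "finite J" by (rule finite_subset[of _ "{..n}"]) (use sq in \<open>auto simp: J_def\<close>)
      have jJ: "j \<in> J" using pT p big by (simp add: J_def c_def)
      define jn where "jn = Min J"
      have jnJ: "jn \<in> J" using finJ jJ unfolding jn_def by (intro Min_in) auto
      have jnmin: "\<And>x. x \<in> J \<Longrightarrow> jn \<le> x" using finJ unfolding jn_def by simp
      have qT: "(i,jn) \<in> T" and cjn: "c < jn" using jnJ by (auto simp: J_def)
      have c1: "1 \<le> c" using i1 by (simp add: c_def)
      have q11: "(i,jn) \<noteq> (1,1)" using cjn c1 by auto
      have left: "\<exists>j'<jn. (i, j') \<in> T" using lT cjn by blast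
      then have noab: "\<not> (\<exists>i'<i. (i', jn) \<in> T)" using xr[OF qT q11] by blast
      have mx: "Max {j'. j' < jn \<and> (i, j') \<in> T} = c"
      proof (rule Max_eqI)
        show "finite {j'. j' < jn \<and> (i, j') \<in> T}" by (rule fin_less1)
      next
        fix y assume "y \<in> {j'. j' < jn \<and> (i, j') \<in> T}"
        then have "y < jn" "(i,y) \<in> T" by auto
        then show "y \<le> c" using jnmin[of y] by (force simp: J_def)
      next
        show "c \<in> {j'. j' < jn \<and> (i, j') \<in> T}" using lT cjn by simp
      qed
      have "cnm_parent T (i,jn) = (i,c)" unfolding parent_simp if_not_P[OF noab] mx ..
      then have "(i,jn) \<in> cnm_children T (i,c)" using qT q11 by (simp add: cnm_children_def)
      then show False using nch by simp
    qed
  qed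
  moreover have "xok {1} T"
    unfolding xok_def
  proof (intro allI impI)
    fix i j assume ij: "(i,j) \<in> T"
    show "(j \<in> {1} \<or> (\<exists>i'<i. (i', j) \<in> T)) \<noteq> (\<exists>j'<j. (i, j') \<in> T)"
    proof (cases "(i,j) = (1,1)")
      case True then show ?thesis using r11 sq by auto
    next
      case False
      note x = xr[OF ij False]
      show ?thesis
      proof (cases "j = 1")
        case True
        then have "\<exists>i'<i. (i', j) \<in> T" using sq ij False r11 by (intro exI[of _ 1]) auto
        then show ?thesis using x True by auto
      next
        case False then show ?thesis using x by auto
      qed
    qed
  qed
  ultimately show ?thesis using aT by (simp add: CC_def)
qed


context
  fixes n :: nat and T :: "(nat \<times> nat) set"
  assumes CCT: "T \<in> CC n {1}" and n1: "1 \<le> n"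
begin

lemma T_tri: "T \<subseteq> tri n" using CCT by (simp add: CC_def)
lemma T_adg: "adg n \<subseteq> T" using CCT by (simp add: CC_def)
lemma T_xok: "xok {1} T" using CCT by (simp add: CC_def)

lemma T_root: "(1,1) \<in> T"
proof -
  have "(1, n) \<in> adg n" using n1 unfolding adg_def by force
  then have "(1,n) \<in> T" using T_adg by auto
  define J where "J = {j. (1,j) \<in> T}"
  have finJ: "finite J" by (rule finite_subset[of _ "{..Suc n}"]) (use T_tri in \<open>auto simp: J_def tri_def\<close>)
  have "n \<in> J" using \<open>(1,n) \<in> T\<close> by (simp add: J_def)
  define j0 where "j0 = Min J"
  have j0J: "j0 \<in> J" using finJ \<open>n \<in> J\<close> unfolding j0_def by (intro Min_in) auto
  have j0min: "\<And>x. x \<in> J \<Longrightarrow> j0 \<le> x" using finJ unfolding j0_def by simp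
  have "(1,j0) \<in> T" using j0J by (simp add: J_def)
  then have x: "(j0 \<in> {1} \<or> (\<exists>i'<1. (i', j0) \<in> T)) \<noteq> (\<exists>j'<j0. (1, j') \<in> T)"
    using T_xok unfolding xok_def by blast
  have "\<not> (\<exists>j'<j0. (1, j') \<in> T)" using j0min by (force simp: J_def)
  moreover have "\<not> (\<exists>i'<1. (i', j0) \<in> T)" using T_tri by (auto simp: tri_def)
  ultimately have "j0 = 1" using x by auto
  then show ?thesis using \<open>(1,j0) \<in> T\<close> by simp
qed

lemma T_xr: "(i,j) \<in> T \<Longrightarrow> (i,j) \<noteq> (1,1) \<Longrightarrow> (\<exists>i'<i. (i', j) \<in> T) \<noteq> (\<exists>j'<j. (i, j') \<in> T)"
proof -
  assume ij: "(i,j) \<in> T" and ne: "(i,j) \<noteq> (1,1)"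
  have x: "(j \<in> {1} \<or> (\<exists>i'<i. (i', j) \<in> T)) \<noteq> (\<exists>j'<j. (i, j') \<in> T)"
    using T_xok ij unfolding xok_def by blast
  show ?thesis
  proof (cases "j = 1")
    case True
    then have "1 \<le> i" using ij T_tri by (auto simp: tri_def)
    then have "i \<noteq> 1 \<Longrightarrow> \<exists>i'<i. (i', j) \<in> T" using T_root True by (intro exI[of _ 1]) auto
    then show ?thesis using x True ne by auto
  next
    case False then show ?thesis using x by auto
  qed
qed

lemma child_cases:
  assumes "(i,j) \<in> cnm_children T (a,b)"
  shows "(j = b \<and> a < i \<and> a = Max {i'. i' < i \<and> (i', j) \<in> T}) \<or>
         (i = a \<and> b < j \<and> b = Max {j'. j' < j \<and> (i, j') \<in> T})"
proof -
  have ij: "(i,j) \<in> T" "(i,j) \<noteq> (1,1)" and par: "cnm_parent T (i,j) = (a,b)"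
    using assms by (auto simp: cnm_children_def)
  show ?thesis
  proof (cases "\<exists>i'<i. (i', j) \<in> T")
    case True
    have e: "(Max {i'. i' < i \<and> (i', j) \<in> T}, j) = (a,b)" using par unfolding parent_simp if_P[OF True] .
    have "Max {i'. i' < i \<and> (i', j) \<in> T} \<in> {i'. i' < i \<and> (i', j) \<in> T}"
      using True by (intro Min_in Max_in fin_less1) auto
    then show ?thesis using e by auto
  next
    case False
    have e: "(i, Max {j'. j' < j \<and> (i, j') \<in> T}) = (a,b)" using par
      unfolding parent_simp if_not_P[OF False] .
    have "\<exists>j'<j. (i, j') \<in> T" using T_xr[OF ij] False by blast
    then have "Max {j'. j' < j \<and> (i, j') \<in> T} \<in> {j'. j' < j \<and> (i, j') \<in> T}"
      by (intro Max_in fin_less1) auto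
    then show ?thesis using e by auto
  qed
qed

lemma children_adg: "(a,b) \<in> adg n \<Longrightarrow> cnm_children T (a,b) = {}"
proof (rule ccontr)
  assume ab: "(a,b) \<in> adg n" and "cnm_children T (a,b) \<noteq> {}"
  then obtain i j where q: "(i,j) \<in> cnm_children T (a,b)" by fastforce
  have "(i,j) \<in> T" using q by (simp add: cnm_children_def)
  then have "i + j \<le> Suc n" using T_tri by (auto simp: tri_def)
  moreover have "a + b = Suc n" using ab by (auto simp: adg_def)
  moreover have "a + b < i + j" using child_cases[OF q] by auto
  ultimately show False by simp
qed

lemma children_int:
  assumes abT: "(a,b) \<in> T" and nadg: "(a,b) \<notin> adg n"
  shows "card (cnm_children T (a,b)) = 2"
proof -
  have ab1: "1 \<le> a" "1 \<le> b" "a + b \<le> Suc n" using abT T_tri by (auto simp: tri_def)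
  have "a + b \<noteq> Suc n"
  proof
    assume "a + b = Suc n"
    then have "(a,b) \<in> adg n" using ab1 unfolding adg_def by force
    then show False using nadg by simp
  qed
  then have lt: "a + b < Suc n" using ab1 by simp
  have r: "(a, Suc n - a) \<in> T" using T_adg ab1 lt unfolding adg_def by force
  have c: "(Suc n - b, b) \<in> T" using T_adg ab1 lt unfolding adg_def by force
  define J where "J = {j. b < j \<and> (a,j) \<in> T}"
  define I where "I = {i. a < i \<and> (i,b) \<in> T}"
  have finJ: "finite J" by (rule finite_subset[of _ "{..Suc n}"]) (use T_tri in \<open>auto simp: J_def tri_def\<close>)
  have finI: "finite I" by (rule finite_subset[of _ "{..Suc n}"]) (use T_tri in \<open>auto simp: I_def tri_def\<close>)
  have "Suc n - a \<in> J" using r lt by (simp add: J_def)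
  have "Suc n - b \<in> I" using c lt by (simp add: I_def)
  define jn where "jn = Min J"
  define inn where "inn = Min I"
  have jnJ: "jn \<in> J" using finJ \<open>Suc n - a \<in> J\<close> unfolding jn_def by (intro Min_in) auto
  have jnmin: "\<And>x. x \<in> J \<Longrightarrow> jn \<le> x" using finJ unfolding jn_def by simp
  have inI: "inn \<in> I" using finI \<open>Suc n - b \<in> I\<close> unfolding inn_def by (intro Min_in) auto
  have inmin: "\<And>x. x \<in> I \<Longrightarrow> inn \<le> x" using finI unfolding inn_def by simp
  have q1T: "(a,jn) \<in> T" and bjn: "b < jn" using jnJ by (auto simp: J_def)
  have q2T: "(inn,b) \<in> T" and ain: "a < inn" using inI by (auto simp: I_def)
  have q1ne: "(a,jn) \<noteq> (1,1)" using bjn ab1 by auto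
  have q2ne: "(inn,b) \<noteq> (1,1)" using ain ab1 by auto
  have "cnm_children T (a,b) = {(a,jn), (inn,b)}"
  proof (rule set_eqI, rule iffI)
    fix q assume qc: "q \<in> cnm_children T (a,b)"
    obtain i j where qq: "q = (i,j)" by fastforce
    have qT: "(i,j) \<in> T" using qc qq by (simp add: cnm_children_def)
    from child_cases[OF qc[unfolded qq]] show "q \<in> {(a,jn), (inn,b)}"
    proof
      assume h: "j = b \<and> a < i \<and> a = Max {i'. i' < i \<and> (i', j) \<in> T}"
      have hj: "j = b" and hai: "a < i" using h by auto
      have "i \<in> I" using hj hai qT by (simp add: I_def)
      then have "inn \<le> i" by (rule inmin)
      moreover have "\<not> inn < i"
      proof
        assume "inn < i"
        then have "inn \<in> {i'. i' < i \<and> (i', j) \<in> T}" using q2T hj by simp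
        then have "inn \<le> Max {i'. i' < i \<and> (i', j) \<in> T}" using fin_less1 by (rule Max_ge[rotated])
        then show False using h ain by simp
      qed
      ultimately show ?thesis using h qq by simp
    next
      assume h: "i = a \<and> b < j \<and> b = Max {j'. j' < j \<and> (i, j') \<in> T}"
      have hi: "i = a" and hbj: "b < j" using h by auto
      have "j \<in> J" using hi hbj qT by (simp add: J_def)
      then have "jn \<le> j" by (rule jnmin)
      moreover have "\<not> jn < j"
      proof
        assume "jn < j"
        then have "jn \<in> {j'. j' < j \<and> (i, j') \<in> T}" using q1T hi by simp
        then have "jn \<le> Max {j'. j' < j \<and> (i, j') \<in> T}" using fin_less1 by (rule Max_ge[rotated])
        then show False using h bjn by simp
      qed
      ultimately show ?thesis using h qq by simp
    qed
  next
    fix q assume "q \<in> {(a,jn), (inn,b)}"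
    then show "q \<in> cnm_children T (a,b)"
    proof
      assume qq: "q = (a,jn)"
      have left: "\<exists>j'<jn. (a, j') \<in> T" using abT bjn by blast
      then have noab: "\<not> (\<exists>i'<a. (i', jn) \<in> T)" using T_xr[OF q1T q1ne] by blast
      have mx: "Max {j'. j' < jn \<and> (a, j') \<in> T} = b"
      proof (rule Max_eqI)
        show "finite {j'. j' < jn \<and> (a, j') \<in> T}" by (rule fin_less1)
      next
        fix y assume "y \<in> {j'. j' < jn \<and> (a, j') \<in> T}"
        then have "y < jn" "(a,y) \<in> T" by auto
        then show "y \<le> b" using jnmin[of y] by (force simp: J_def)
      next
        show "b \<in> {j'. j' < jn \<and> (a, j') \<in> T}" using abT bjn by simp
      qed
      have "cnm_parent T (a,jn) = (a,b)" unfolding parent_simp if_not_P[OF noab] mx ..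
      then show ?thesis using qq q1T q1ne by (simp add: cnm_children_def)
    next
      assume "q \<in> {(inn,b)}"
      then have qq: "q = (inn,b)" by simp
      have ab: "\<exists>i'<inn. (i', b) \<in> T" using abT ain by blast
      have mx: "Max {i'. i' < inn \<and> (i', b) \<in> T} = a"
      proof (rule Max_eqI)
        show "finite {i'. i' < inn \<and> (i', b) \<in> T}" by (rule fin_less1)
      next
        fix y assume "y \<in> {i'. i' < inn \<and> (i', b) \<in> T}"
        then have "y < inn" "(y,b) \<in> T" by auto
        then show "y \<le> a" using inmin[of y] by (force simp: I_def)
      next
        show "a \<in> {i'. i' < inn \<and> (i', b) \<in> T}" using abT ain by simp
      qed
      have "cnm_parent T (inn,b) = (a,b)" unfolding parent_simp if_P[OF ab] mx ..
      then show ?thesis using qq q2T q2ne by (simp add: cnm_children_def)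
    qed
  qed
  moreover have "(a,jn) \<noteq> (inn,b)" using bjn by auto
  ultimately show ?thesis by simp
qed

lemma CC_to_ud: "is_upper_diagonal_cnm n T"
proof -
  have sq: "T \<subseteq> {1..n} \<times> {1..n}" using T_tri n1 by (auto simp: tri_def)
  have rows: "\<forall>i \<in> {1..n}. \<exists>j. (i, j) \<in> T"
  proof
    fix i assume "i \<in> {1..n}"
    then have "(i, Suc n - i) \<in> adg n" unfolding adg_def by force
    then show "\<exists>j. (i, j) \<in> T" using T_adg by blast
  qed
  have cols: "\<forall>j \<in> {1..n}. \<exists>i. (i, j) \<in> T"
  proof
    fix j assume j: "j \<in> {1..n}"
    then have "(Suc n - j, Suc n - (Suc n - j)) \<in> adg n" unfolding adg_def by force
    moreover have "Suc n - (Suc n - j) = j" using j by auto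
    ultimately show "\<exists>i. (i, j) \<in> T" using T_adg by auto
  qed
  have xr: "\<forall>(i, j) \<in> T. (i, j) \<noteq> (1, 1) \<longrightarrow> ((\<exists>i'<i. (i', j) \<in> T) \<noteq> (\<exists>j'<j. (i, j') \<in> T))"
    using T_xr by blast
  have ch: "\<forall>p \<in> T. card (cnm_children T p) = 0 \<or> card (cnm_children T p) = 2"
  proof
    fix p assume pT: "p \<in> T"
    obtain a b where p: "p = (a,b)" by fastforce
    show "card (cnm_children T p) = 0 \<or> card (cnm_children T p) = 2"
      using children_adg children_int pT p by (cases "(a,b) \<in> adg n") auto
  qed
  have "is_cnm n T" unfolding is_cnm_def using sq T_root xr rows cols ch by blast
  moreover have "cnm_leaves T = adg n"
  proof (rule set_eqI)
    fix p :: "nat \<times> nat"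
    obtain a b where p: "p = (a,b)" by fastforce
    show "p \<in> cnm_leaves T \<longleftrightarrow> p \<in> adg n"
    proof
      assume "p \<in> cnm_leaves T"
      then have "p \<in> T" "cnm_children T p = {}" by (auto simp: cnm_leaves_def)
      then show "p \<in> adg n" using children_int p by (metis card.empty zero_neq_numeral)
    next
      assume "p \<in> adg n"
      then show "p \<in> cnm_leaves T" using T_adg children_adg p by (auto simp: cnm_leaves_def)
    qed
  qed
  ultimately show ?thesis unfolding is_upper_diagonal_cnm_def adg_eq by simp
qed

end

lemma prod_fact: "(\<Prod>j\<in>{2..Suc m}. j - 1) = fact m"
proof (induction m)
  case 0 then show ?case by simp
next
  case (Suc m)
  have "{2..Suc (Suc m)} = insert (Suc (Suc m)) {2..Suc m}" by auto
  then show ?case using Suc by simp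
qed

theorem theorem4p3:
  fixes n :: nat
  assumes "n \<ge> 1"
  shows "(\<exists>f. bij_betw f {T. is_upper_diagonal_cnm n T} {p. p permutes {1..<n}}) \<and>
         card {T. is_upper_diagonal_cnm n T} = fact (n - 1)"
proof -
  have eq: "{T. is_upper_diagonal_cnm n T} = CC n {1}"
    using ud_to_CC CC_to_ud[OF _ assms] by blast
  obtain m where m: "n = Suc m" using assms by (cases n) auto
  have "{2..n} - {1} = {2..Suc m}" using m by auto
  then have c: "card {T. is_upper_diagonal_cnm n T} = fact (n - 1)"
    unfolding eq using card_CC[of "{1}" n] m prod_fact by simp
  have cp: "card {p. p permutes {1..<n}} = fact (n - 1)"
    by (rule card_permutations) auto
  have "\<exists>f. bij_betw f {T. is_upper_diagonal_cnm n T} {p. p permutes {1..<n}}"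
    by (rule finite_same_card_bij) (use c cp eq finite_CC finite_permutations in auto)
  then show ?thesis using c by blast
qed

end
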